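(* Let $r>0$, $d>0$ with $d\sqrt{2}<r$, and let $X\subseteq\mathbb{R}^2$ be a bounded $r$-regular set whose boundary contains no point of $d\mathbb{Z}^2$. Consider a $3\times 3$ block of pixels of the lattice $d\mathbb{Z}^2$ whose middle pixel is grey. Then at least one of the 8 other pixels of the block is not grey.
   Context: A closed set $X\subseteq\mathbb{R}^2$ is $r$-regular if for each $x\in\partial X$ there are two open balls of radius $r$, $B_r(x_b)\subseteq X$ and $B_r(x_w)\subseteq \mathbb{R}^2\setminus X$, with $\overline{B_r(x_b)}\cap\overline{B_r(x_w)}=\{x\}$. Pixels are the closed squares $[dk,d(k+1)]\times[dl,d(l+1)]$, $k,l\in\mathbb{Z}$. A pixel $P$ is black if $\mathrm{area}(X\cap P)=d^2$, white if $\mathrm{area}(X\cap P)=0$, and grey otherwise. *)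

theory Defs
  imports "HOL-Analysis.Analysis"
begin

definition r_regular :: "real \<Rightarrow> (real \<times> real) set \<Rightarrow> bool" where
  "r_regular r X \<longleftrightarrow> closed X \<and>
     (\<forall>x\<in>frontier X. \<exists>xb xw. ball xb r \<subseteq> X \<and> ball xw r \<subseteq> - X \<and>
        closure (ball xb r) \<inter> closure (ball xw r) = {x})"

definition pixel :: "real \<Rightarrow> int \<Rightarrow> int \<Rightarrow> (real \<times> real) set" where
  "pixel d k l = {d * of_int k .. d * (of_int k + 1)} \<times> {d * of_int l .. d * (of_int l + 1)}"

definition black_pixel :: "(real \<times> real) set \<Rightarrow> real \<Rightarrow> int \<Rightarrow> int \<Rightarrow> bool" where
  "black_pixel X d k l \<longleftrightarrow> measure lebesgue (X \<inter> pixel d k l) = d\<^sup>2"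

definition white_pixel :: "(real \<times> real) set \<Rightarrow> real \<Rightarrow> int \<Rightarrow> int \<Rightarrow> bool" where
  "white_pixel X d k l \<longleftrightarrow> measure lebesgue (X \<inter> pixel d k l) = 0"

definition grey_pixel :: "(real \<times> real) set \<Rightarrow> real \<Rightarrow> int \<Rightarrow> int \<Rightarrow> bool" where
  "grey_pixel X d k l \<longleftrightarrow> \<not> black_pixel X d k l \<and> \<not> white_pixel X d k l"

end

theory Submission
  imports Defs
begin

lemma good_pixel:
  fixes d a b :: real
  assumes "d > 0" "-d \<le> a" "a \<le> 2*d" "-d \<le> b" "b \<le> 2*d" "\<not> (0 < a \<and> a < d \<and> 0 < b \<and> b < d)"
  shows "\<exists>i j::int. i \<in> {-1,0,1} \<and> j \<in> {-1,0,1} \<and> (i,j) \<noteq> (0,0) \<and>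
     d * of_int i \<le> a \<and> a \<le> d * (of_int i + 1) \<and> d * of_int j \<le> b \<and> b \<le> d * (of_int j + 1)"
proof -
  define i :: int where "i = (if a \<le> 0 then -1 else if a < d then 0 else 1)"
  define j :: int where "j = (if b \<le> 0 then -1 else if b < d then 0 else 1)"
  have "i \<in> {-1,0,1} \<and> j \<in> {-1,0,1} \<and> (i,j) \<noteq> (0,0) \<and>
     d * of_int i \<le> a \<and> a \<le> d * (of_int i + 1) \<and> d * of_int j \<le> b \<and> b \<le> d * (of_int j + 1)"
    using assms unfolding i_def j_def by auto
  then show ?thesis by blast
qed

lemma coord_aux:
  fixes d p w :: real
  assumes "d > 0" "0 \<le> p" "p \<le> d" "w^2 \<le> 2*d^2" "2*d < p + w"
  shows "-d \<le> p - w \<and> p - w \<le> 2*d \<and> d^2 < w^2"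
proof -
  have "w > d" using assms by linarith
  hence dw: "d^2 < w^2" using assms(1) by (simp add: power_strict_mono)
  have "w \<le> p + d"
  proof (rule ccontr)
    assume "\<not> w \<le> p + d"
    hence "w > 3/2*d" using assms by linarith
    hence "(3/2*d)^2 < w^2" using assms(1) by (intro power_strict_mono) auto
    moreover have "0 < d*d" using assms(1) by simp
    ultimately show False using assms(4) by (simp add: power2_eq_square)
  qed
  thus ?thesis using assms dw by linarith
qed

lemma sq_lt_abs:
  fixes d w :: real
  assumes "d > 0" "w^2 < d^2" shows "-d < w \<and> w < d"
proof -
  have h: "\<bar>w\<bar>^2 < d^2" using assms(2) by simp
  have "\<bar>w\<bar> < d" using power_less_imp_less_base[OF h] assms(1) by simp
  thus ?thesis by auto
qed

lemma good_or:
  fixes d p q w1 w2 :: real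
  assumes d: "d > 0" and p: "0 \<le> p" "p \<le> d" and q: "0 \<le> q" "q \<le> d" and w: "w1^2 + w2^2 = 2*d^2"
  shows "(-d \<le> p+w1 \<and> p+w1 \<le> 2*d \<and> -d \<le> q+w2 \<and> q+w2 \<le> 2*d) \<or>
         (-d \<le> p-w1 \<and> p-w1 \<le> 2*d \<and> -d \<le> q-w2 \<and> q-w2 \<le> 2*d)"
proof -
  have w1: "w1^2 \<le> 2*d^2" and w2: "w2^2 \<le> 2*d^2" using w zero_le_power2[of w1] zero_le_power2[of w2] by linarith+
  have w1m: "(-w1)^2 \<le> 2*d^2" and w2m: "(-w2)^2 \<le> 2*d^2" using w1 w2 by auto
  show ?thesis
  proof (cases "2*d < p + w1")
    case True
    from coord_aux[OF d p w1 True] have A: "-d \<le> p - w1 \<and> p - w1 \<le> 2*d" and B: "d^2 < w1^2" by auto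
    have "w2^2 < d^2" using B w by linarith
    from sq_lt_abs[OF d this] have "-d < w2 \<and> w2 < d" .
    thus ?thesis using A q by auto
  next
    case c1: False
    show ?thesis
    proof (cases "p + w1 < -d")
      case True
      have "2*d < (d - p) + (-w1)" using True by linarith
      from coord_aux[OF d _ _ w1m this] p have A: "-d \<le> p - w1 \<and> p - w1 \<le> 2*d" and B: "d^2 < w1^2" by auto
      have "w2^2 < d^2" using B w by linarith
      from sq_lt_abs[OF d this] have "-d < w2 \<and> w2 < d" .
      thus ?thesis using A q by auto
    next
      case c2: False
      show ?thesis
      proof (cases "2*d < q + w2")
        case True
        from coord_aux[OF d q w2 True] have A: "-d \<le> q - w2 \<and> q - w2 \<le> 2*d" and B: "d^2 < w2^2" by auto
        have "w1^2 < d^2" using B w by linarith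
        from sq_lt_abs[OF d this] have "-d < w1 \<and> w1 < d" .
        thus ?thesis using A p by auto
      next
        case c3: False
        show ?thesis
        proof (cases "q + w2 < -d")
          case True
          have "2*d < (d - q) + (-w2)" using True by linarith
          from coord_aux[OF d _ _ w2m this] q have A: "-d \<le> q - w2 \<and> q - w2 \<le> 2*d" and B: "d^2 < w2^2" by auto
          have "w1^2 < d^2" using B w by linarith
          from sq_lt_abs[OF d this] have "-d < w1 \<and> w1 < d" .
          thus ?thesis using A p by auto
        next
          case False
          thus ?thesis using c1 c2 c3 by auto
        qed
      qed
    qed
  qed
qed

lemma not_open:
  fixes d p q w1 w2 :: real
  assumes d: "d > 0" and p: "0 \<le> p" "p \<le> d" and q: "0 \<le> q" "q \<le> d" and w: "w1^2 + w2^2 = 2*d^2"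
  shows "\<not> (0 < p+w1 \<and> p+w1 < d \<and> 0 < q+w2 \<and> q+w2 < d)"
proof
  assume h: "0 < p+w1 \<and> p+w1 < d \<and> 0 < q+w2 \<and> q+w2 < d"
  hence "\<bar>w1\<bar> < d" "\<bar>w2\<bar> < d" using p q by auto
  hence "\<bar>w1\<bar>^2 < d^2" "\<bar>w2\<bar>^2 < d^2"
    using power_strict_mono[OF _ abs_ge_zero, of w1 d 2] power_strict_mono[OF _ abs_ge_zero, of w2 d 2] by auto
  hence "w1^2 < d^2" "w2^2 < d^2" by simp_all
  thus False using w by linarith
qed

lemma pixel_cbox: "pixel d k l = cbox (d * of_int k, d * of_int l) (d * (of_int k + 1), d * (of_int l + 1))"
  unfolding pixel_def by (simp add: cbox_Pair_eq)

lemma measure_pixel: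
  assumes "d > 0" shows "measure lebesgue (pixel d k l) = d^2"
proof -
  have "measure lebesgue (pixel d k l) = Henstock_Kurzweil_Integration.content (pixel d k l)"
    unfolding pixel_cbox by (metis cbox_borel measure_completion sets_lborel)
  also have "... = d^2" unfolding pixel_cbox content_Pair using assms by (simp add: power2_eq_square algebra_simps)
  finally show ?thesis .
qed

lemma pixel_in_cball:
  assumes "d > 0" "c \<in> pixel d k l" shows "pixel d k l \<subseteq> cball c (sqrt 2 * d)"
proof
  fix z assume z: "z \<in> pixel d k l"
  obtain c1 c2 where c: "c = (c1,c2)" by (cases c)
  obtain z1 z2 where zz: "z = (z1,z2)" by (cases z)
  have "\<bar>c1 - z1\<bar> \<le> d" "\<bar>c2 - z2\<bar> \<le> d" using assms z unfolding c zz pixel_def by (auto simp: algebra_simps)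
  hence "(c1-z1)^2 \<le> d^2" "(c2-z2)^2 \<le> d^2" using assms(1) by (metis abs_le_square_iff abs_of_pos)+
  hence "(c1-z1)^2 + (c2-z2)^2 \<le> 2 * d^2" by linarith
  hence "sqrt ((c1-z1)^2 + (c2-z2)^2) \<le> sqrt (2 * d^2)" by (rule real_sqrt_le_mono)
  also have "sqrt (2 * d^2) = sqrt 2 * d" using assms(1) by (simp add: real_sqrt_mult)
  finally show "z \<in> cball c (sqrt 2 * d)" unfolding c zz by (simp add: dist_Pair_Pair dist_real_def)
qed

lemma dist2: "dist (a1::real, a2::real) (b1, b2) = sqrt ((a1-b1)^2 + (a2-b2)^2)"
  by (simp add: dist_Pair_Pair dist_real_def)

lemma ball_shrink:
  fixes y1 y2 v1 v2 s r :: real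
  assumes "r > 0" "0 \<le> s" "s \<le> 1" "v1^2 + v2^2 = r^2" "dist (y1 + s * v1, y2 + s * v2) z \<le> s*r"
  shows "dist (y1 + v1, y2 + v2) z \<le> r"
proof -
  have "dist (y1 + v1, y2 + v2) (y1 + s * v1, y2 + s * v2) = sqrt ((1-s)^2 * (v1^2 + v2^2))"
    unfolding dist2 by (simp add: power2_eq_square algebra_simps)
  also have "... = (1-s) * r" using assms by (simp add: real_sqrt_mult)
  finally have e: "dist (y1 + v1, y2 + v2) (y1 + s * v1, y2 + s * v2) = (1-s) * r" .
  have "dist (y1 + v1, y2 + v2) z \<le> dist (y1 + v1, y2 + v2) (y1 + s * v1, y2 + s * v2) + dist (y1 + s * v1, y2 + s * v2) z"
    by (rule dist_triangle)
  also have "... \<le> (1-s)*r + s*r" using e assms(5) by linarith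
  finally show ?thesis by (simp add: algebra_simps)
qed

lemma sqrt_le_sq: "sqrt S \<le> (r::real) \<Longrightarrow> 0 \<le> S \<Longrightarrow> S \<le> r^2"
  by (metis real_sqrt_ge_zero power_mono real_sqrt_pow2)

lemma sq_le_sqrt: "(r::real) \<le> sqrt S \<Longrightarrow> 0 \<le> r \<Longrightarrow> 0 \<le> S \<Longrightarrow> r^2 \<le> S"
  by (metis power_mono real_sqrt_pow2)

lemma midpoint_coords:
  fixes x1 x2 a1 a2 b1 b2 r :: real
  assumes "(x1-a1)^2+(x2-a2)^2 \<le> r^2" "(x1-b1)^2+(x2-b2)^2 \<le> r^2" "4*r^2 \<le> (a1-b1)^2+(a2-b2)^2"
  shows "b1 = x1 - (a1 - x1) \<and> b2 = x2 - (a2 - x2) \<and> (a1-x1)^2 + (a2-x2)^2 = r^2"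
proof -
  have i1: "(x1-a1)^2 + (x1-b1)^2 = 2*(x1 - (a1+b1)/2)^2 + (a1-b1)^2/2" by (simp add: power2_eq_square field_simps)
  have i2: "(x2-a2)^2 + (x2-b2)^2 = 2*(x2 - (a2+b2)/2)^2 + (a2-b2)^2/2" by (simp add: power2_eq_square field_simps)
  have "(x1 - (a1+b1)/2)^2 + (x2 - (a2+b2)/2)^2 \<le> 0" using assms i1 i2 by linarith
  hence z: "(x1 - (a1+b1)/2)^2 = 0" "(x2 - (a2+b2)/2)^2 = 0"
    using zero_le_power2[of "x1 - (a1+b1)/2"] zero_le_power2[of "x2 - (a2+b2)/2"] by linarith+
  hence m: "x1 = (a1+b1)/2" "x2 = (a2+b2)/2" by auto
  have b: "b1 = 2*x1 - a1" "b2 = 2*x2 - a2" using m by auto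
  have "(a1-x1)^2 + (a2-x2)^2 = ((a1-b1)^2+(a2-b2)^2)/4" unfolding b by (simp add: power2_eq_square algebra_simps)
  moreover have "(a1-x1)^2 + (a2-x2)^2 = (x1-a1)^2+(x2-a2)^2" by (simp add: power2_commute)
  ultimately have "(a1-x1)^2 + (a2-x2)^2 = r^2" using assms by argo
  moreover have "b1 = x1 - (a1 - x1)" "b2 = x2 - (a2 - x2)" using b by auto
  ultimately show ?thesis by blast
qed

theorem lemma3p4:
  fixes r d :: real and X :: "(real \<times> real) set" and k l :: int
  assumes "r > 0" and "d > 0" and "d * sqrt 2 < r"
    and "bounded X" and "r_regular r X"
    and "\<forall>i j :: int. (d * of_int i, d * of_int j) \<notin> frontier X"
    and "grey_pixel X d k l"
  shows "\<exists>i j :: int. i \<in> {-1, 0, 1} \<and> j \<in> {-1, 0, 1} \<and> (i, j) \<noteq> (0, 0) \<and>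
           \<not> grey_pixel X d (k + i) (l + j)"
proof -
  note r0 = assms(1) and d0 = assms(2) and dr = assms(3) and reg = assms(5) and grey = assms(7)
  have clX: "closed X" using reg unfolding r_regular_def by auto
  let ?P = "pixel d k l"
  have conn: "connected ?P" unfolding pixel_cbox by (simp add: is_interval_connected is_interval_cbox)
  have ne1: "?P \<inter> X \<noteq> {}"
  proof
    assume "?P \<inter> X = {}"
    hence "X \<inter> ?P = {}" by auto
    hence "white_pixel X d k l" unfolding white_pixel_def by simp
    with grey show False unfolding grey_pixel_def by auto
  qed
  have ne2: "?P - X \<noteq> {}"
  proof
    assume "?P - X = {}"
    hence "X \<inter> ?P = ?P" by auto
    hence "black_pixel X d k l" unfolding black_pixel_def using measure_pixel[OF d0] by simp
    with grey show False unfolding grey_pixel_def by auto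
  qed
  obtain x where xP: "x \<in> ?P" and xF: "x \<in> frontier X"
    using connected_Int_frontier[OF conn ne1 ne2] by auto
  from reg xF obtain xb xw where bX: "ball xb r \<subseteq> X" and wX: "ball xw r \<subseteq> - X"
    and cl0: "closure (ball xb r) \<inter> closure (ball xw r) = {x}"
    unfolding r_regular_def by blast
  have cl: "cball xb r \<inter> cball xw r = {x}" using cl0 r0 by (simp add: closure_ball)
  have cbX: "cball xb r \<subseteq> X"
    using closure_minimal[OF bX clX] r0 by (simp add: closure_ball)
  have x_b: "dist x xb \<le> r" and x_w: "dist x xw \<le> r" using cl by (auto simp: dist_commute)
  have far: "2*r \<le> dist xb xw"
  proof (rule ccontr)
    assume "\<not> 2*r \<le> dist xb xw"
    hence "dist xb (midpoint xb xw) < r" "dist xw (midpoint xb xw) < r"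
      by (simp_all add: dist_midpoint)
    hence "midpoint xb xw \<in> X" "midpoint xb xw \<in> - X" using bX wX by auto
    thus False by auto
  qed
  obtain x1 x2 where x: "x = (x1,x2)" by (cases x)
  obtain a1 a2 where a: "xb = (a1,a2)" by (cases xb)
  obtain b1 b2 where b: "xw = (b1,b2)" by (cases xw)
  have h1: "(x1-a1)^2+(x2-a2)^2 \<le> r^2" using x_b unfolding x a dist2 by (intro sqrt_le_sq) auto
  have h2: "(x1-b1)^2+(x2-b2)^2 \<le> r^2" using x_w unfolding x b dist2 by (intro sqrt_le_sq) auto
  have "(2*r)^2 \<le> (a1-b1)^2+(a2-b2)^2" using far r0 unfolding a b dist2 by (intro sq_le_sqrt) auto
  hence h3: "4*r^2 \<le> (a1-b1)^2+(a2-b2)^2" by (simp add: power2_eq_square)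
  from midpoint_coords[OF h1 h2 h3]
  have bb: "b1 = x1 - (a1 - x1)" "b2 = x2 - (a2 - x2)" and vr: "(a1-x1)^2 + (a2-x2)^2 = r^2" by auto
  define v1 where "v1 = a1 - x1"
  define v2 where "v2 = a2 - x2"
  define s where "s = sqrt 2 * d / r"
  have s0: "0 \<le> s" using r0 d0 unfolding s_def by simp
  have s1: "s \<le> 1" using r0 dr unfolding s_def by (simp add: field_simps)
  have sr: "s * r = sqrt 2 * d" using r0 unfolding s_def by simp
  have v: "v1^2 + v2^2 = r^2" using vr unfolding v1_def v2_def .
  have vm: "(-v1)^2 + (-v2)^2 = r^2" using v by simp
  define w1 where "w1 = s * v1"
  define w2 where "w2 = s * v2"
  have w: "w1^2 + w2^2 = 2*d^2"
  proof -
    have "w1^2 + w2^2 = s^2 * (v1^2 + v2^2)" unfolding w1_def w2_def by (simp add: power_mult_distrib algebra_simps)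
    also have "... = (s*r)^2" using v by (simp add: power_mult_distrib)
    also have "... = 2*d^2" unfolding sr by (simp add: power_mult_distrib)
    finally show ?thesis .
  qed
  have wm: "(-w1)^2 + (-w2)^2 = 2*d^2" using w by simp
  define p where "p = x1 - d * of_int k"
  define q where "q = x2 - d * of_int l"
  have pq: "0 \<le> p" "p \<le> d" "0 \<le> q" "q \<le> d" using xP unfolding x pixel_def p_def q_def by (auto simp: algebra_simps)
  have xb_eq: "xb = (x1 + v1, x2 + v2)" unfolding a v1_def v2_def by simp
  have xw_eq: "xw = (x1 + - v1, x2 + - v2)" unfolding b bb v1_def v2_def by simp
  from good_or[OF d0 pq w] show ?thesis
  proof
    assume g: "-d \<le> p+w1 \<and> p+w1 \<le> 2*d \<and> -d \<le> q+w2 \<and> q+w2 \<le> 2*d"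
    from good_pixel[of d "p+w1" "q+w2"] g d0 not_open[OF d0 pq w]
    obtain i j :: int where ij: "i \<in> {-1,0,1}" "j \<in> {-1,0,1}" "(i,j) \<noteq> (0,0)"
      and c: "d * of_int i \<le> p+w1" "p+w1 \<le> d * (of_int i + 1)" "d * of_int j \<le> q+w2" "q+w2 \<le> d * (of_int j + 1)"
      by blast
    let ?Q = "pixel d (k+i) (l+j)"
    have cQ: "(x1 + s * v1, x2 + s * v2) \<in> ?Q"
      using c unfolding pixel_def p_def q_def w1_def w2_def by (auto simp: algebra_simps)
    have "?Q \<subseteq> cball xb r"
    proof
      fix z assume "z \<in> ?Q"
      hence "dist (x1 + s * v1, x2 + s * v2) z \<le> s * r" using pixel_in_cball[OF d0 cQ] sr by auto
      from ball_shrink[OF r0 s0 s1 v this] show "z \<in> cball xb r" unfolding xb_eq by simp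
    qed
    hence "X \<inter> ?Q = ?Q" using cbX by auto
    hence "black_pixel X d (k+i) (l+j)" unfolding black_pixel_def using measure_pixel[OF d0] by simp
    hence "\<not> grey_pixel X d (k+i) (l+j)" unfolding grey_pixel_def by auto
    thus ?thesis using ij by blast
  next
    assume g: "-d \<le> p-w1 \<and> p-w1 \<le> 2*d \<and> -d \<le> q-w2 \<and> q-w2 \<le> 2*d"
    have no: "\<not> (0 < p-w1 \<and> p-w1 < d \<and> 0 < q-w2 \<and> q-w2 < d)"
      using not_open[OF d0 pq wm] by simp
    from good_pixel[of d "p-w1" "q-w2"] g d0 no
    obtain i j :: int where ij: "i \<in> {-1,0,1}" "j \<in> {-1,0,1}" "(i,j) \<noteq> (0,0)"
      and c: "d * of_int i \<le> p-w1" "p-w1 \<le> d * (of_int i + 1)" "d * of_int j \<le> q-w2" "q-w2 \<le> d * (of_int j + 1)"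
      by blast
    let ?Q = "pixel d (k+i) (l+j)"
    have cQ: "(x1 + s * (-v1), x2 + s * (-v2)) \<in> ?Q"
      using c unfolding pixel_def p_def q_def w1_def w2_def by (auto simp: algebra_simps)
    have Qc: "?Q \<subseteq> cball xw r"
    proof
      fix z assume "z \<in> ?Q"
      hence "dist (x1 + s * (-v1), x2 + s * (-v2)) z \<le> s * r" using pixel_in_cball[OF d0 cQ] sr by auto
      from ball_shrink[OF r0 s0 s1 vm this] show "z \<in> cball xw r" unfolding xw_eq by simp
    qed
    have "X \<inter> ?Q \<subseteq> sphere xw r"
    proof
      fix z assume z: "z \<in> X \<inter> ?Q"
      hence "z \<notin> ball xw r" using wX by auto
      moreover have "z \<in> cball xw r" using z Qc by auto
      ultimately show "z \<in> sphere xw r" by auto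
    qed
    hence "negligible (X \<inter> ?Q)" using negligible_subset negligible_sphere by blast
    hence "white_pixel X d (k+i) (l+j)" unfolding white_pixel_def by (rule negligible_imp_measure0)
    hence "\<not> grey_pixel X d (k+i) (l+j)" unfolding grey_pixel_def by auto
    thus ?thesis using ij by blast
  qed
qed

end
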